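(* Let $E\in M_n(\mathbb{FT})$ be idempotent. Then there is an idempotent $E'\in M_n(\mathbb{FT})$ such that $E\,\mathcal{D}\,E'$ and all diagonal entries of $E'$ are equal to $0$.
   Context: $\mathbb{FT}$ is $\mathbb{R}$ with $a\oplus b=\max(a,b)$, $a\otimes b=a+b$; $M_n(\mathbb{FT})$ is the semigroup of real $n\times n$ matrices under $(A\otimes B)_{i,j}=\max_k(A_{i,k}+B_{k,j})$. Green's relations on a semigroup $S$ ($S^1$ is $S$ with an identity adjoined if it has none): $a\,\mathcal{R}\,b$ iff $aS^1=bS^1$, $a\,\mathcal{L}\,b$ iff $S^1a=S^1b$, and $a\,\mathcal{D}\,b$ iff there is $c\in S$ with $a\,\mathcal{R}\,c$ and $c\,\mathcal{L}\,b$. *)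

theory Defs
  imports Complex_Main
begin

text \<open>Tropical (max-plus) n x n matrices over the reals, with the index set a finite type 'n
  (n = CARD('n) >= 1 arbitrary).\<close>

type_synonym 'n tmat = "'n \<Rightarrow> 'n \<Rightarrow> real"

definition tmult :: "('n::finite) tmat \<Rightarrow> 'n tmat \<Rightarrow> 'n tmat" where
  "tmult A B = (\<lambda>i j. Max (range (\<lambda>k. A i k + B k j)))"

definition tidempotent :: "('n::finite) tmat \<Rightarrow> bool" where
  "tidempotent E \<longleftrightarrow> tmult E E = E"

text \<open>Principal one-sided ideals in S^1: A S^1 = {A} \<union> A S, S^1 A = {A} \<union> S A.\<close>

definition right_ideal1 :: "('n::finite) tmat \<Rightarrow> 'n tmat set" where
  "right_ideal1 A = insert A (range (\<lambda>X. tmult A X))"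

definition left_ideal1 :: "('n::finite) tmat \<Rightarrow> 'n tmat set" where
  "left_ideal1 A = insert A (range (\<lambda>X. tmult X A))"

definition green_R :: "('n::finite) tmat \<Rightarrow> 'n tmat \<Rightarrow> bool" where
  "green_R A B \<longleftrightarrow> right_ideal1 A = right_ideal1 B"

definition green_L :: "('n::finite) tmat \<Rightarrow> 'n tmat \<Rightarrow> bool" where
  "green_L A B \<longleftrightarrow> left_ideal1 A = left_ideal1 B"

definition green_D :: "('n::finite) tmat \<Rightarrow> 'n tmat \<Rightarrow> bool" where
  "green_D A B \<longleftrightarrow> (\<exists>C. green_R A C \<and> green_L C B)"

end

theory Submission
  imports Defs
begin

lemma tmult_ge: "A i k + B k j \<le> tmult A B i j"
  unfolding tmult_def by (rule Max_ge) auto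

lemma tmult_ex: "\<exists>k. tmult A B i j = A i k + B k j"
proof -
  have "tmult A B i j \<in> range (\<lambda>k. A i k + B k j)"
    unfolding tmult_def by (rule Max_in) auto
  then show ?thesis by auto
qed

lemma tmult_eqI:
  assumes "\<And>k. A i k + B k j \<le> c" and "A i l + B l j = c"
  shows "tmult A B i j = c"
proof -
  obtain k where k: "tmult A B i j = A i k + B k j" using tmult_ex by blast
  have "tmult A B i j \<le> c" using k assms(1) by simp
  moreover have "c \<le> tmult A B i j" using tmult_ge[of A i l B j] assms(2) by simp
  ultimately show ?thesis by simp
qed

lemma tmult_assoc: "tmult (tmult A B) C = tmult A (tmult B C)"
proof (intro ext)
  fix i j
  obtain k where k: "tmult (tmult A B) C i j = tmult A B i k + C k j" using tmult_ex by blast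
  obtain l where l: "tmult A B i k = A i l + B l k" using tmult_ex by blast
  obtain l' where l': "tmult A (tmult B C) i j = A i l' + tmult B C l' j" using tmult_ex by blast
  obtain k' where k': "tmult B C l' j = B l' k' + C k' j" using tmult_ex by blast
  have "tmult (tmult A B) C i j \<le> tmult A (tmult B C) i j"
    using k l tmult_ge[of B l k C j] tmult_ge[of A i l "tmult B C" j] by simp
  moreover have "tmult A (tmult B C) i j \<le> tmult (tmult A B) C i j"
    using l' k' tmult_ge[of A i l' B k'] tmult_ge[of "tmult A B" i k' C j] by simp
  ultimately show "tmult (tmult A B) C i j = tmult A (tmult B C) i j" by simp
qed

lemma green_R_I:
  assumes "A = tmult B X" "B = tmult A Y"
  shows "green_R A B"
proof -
  have "right_ideal1 A \<subseteq> right_ideal1 B" if h: "A = tmult B X" for A B X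
  proof
    fix Z assume "Z \<in> right_ideal1 A"
    then have "Z = A \<or> (\<exists>W. Z = tmult A W)" unfolding right_ideal1_def by blast
    then have "\<exists>W. Z = tmult B W" using h tmult_assoc by metis
    then show "Z \<in> right_ideal1 B" unfolding right_ideal1_def by blast
  qed
  then show ?thesis unfolding green_R_def using assms by blast
qed

lemma green_L_I:
  assumes "A = tmult X B" "B = tmult Y A"
  shows "green_L A B"
proof -
  have "left_ideal1 A \<subseteq> left_ideal1 B" if h: "A = tmult X B" for A B X
  proof
    fix Z assume "Z \<in> left_ideal1 A"
    then have "Z = A \<or> (\<exists>W. Z = tmult W A)" unfolding left_ideal1_def by blast
    then have "\<exists>W. Z = tmult W B" using h tmult_assoc by metis
    then show "Z \<in> left_ideal1 B" unfolding left_ideal1_def by blast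
  qed
  then show ?thesis unfolding green_L_def using assms by blast
qed

context
  fixes E :: "('n::finite) tmat"
  assumes idem: "tidempotent E"
begin

lemma idem_ge: "E i k + E k j \<le> E i j"
  using tmult_ge[of E i k E j] idem unfolding tidempotent_def by simp

lemma idem_ex: "\<exists>k. E i j = E i k + E k j"
  using tmult_ex[of E E i j] idem unfolding tidempotent_def by simp

lemma decomp: "\<exists>v. E v v = 0 \<and> E i j = E i v + E v j"
proof -
  define nx where "nx = (\<lambda>w. SOME k. E w j = E w k + E k j)"
  have nx: "E w j = E w (nx w) + E (nx w) j" for w
    unfolding nx_def using someI_ex[OF idem_ex[of w j]] .
  define w where "w = (\<lambda>t. (nx ^^ t) i)"
  have wS: "w (Suc t) = nx (w t)" for t unfolding w_def by simp
  have inv: "E (w s) j = E (w s) (w (s + Suc d)) + E (w (s + Suc d)) j" for s d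
  proof (induction d)
    case 0
    show ?case using nx[of "w s"] wS[of s] by simp
  next
    case (Suc d)
    let ?a = "w (s + Suc d)" and ?b = "w (s + Suc (Suc d))"
    have b: "?b = nx ?a" using wS[of "s + Suc d"] by simp
    have "E (w s) ?a + E ?a ?b \<le> E (w s) ?b" by (rule idem_ge)
    moreover have "E (w s) ?b + E ?b j \<le> E (w s) j" by (rule idem_ge)
    moreover have "E ?a j = E ?a ?b + E ?b j" using nx[of ?a] unfolding b .
    ultimately show ?case using Suc.IH by linarith
  qed
  have "\<not> inj w"
  proof
    assume i: "inj w"
    have "finite (range w)" by (rule finite)
    then have "finite (UNIV :: nat set)" using finite_imageD i by blast
    then show False using infinite_UNIV_nat by blast
  qed
  then obtain s t where st: "w s = w t" "s \<noteq> t" unfolding inj_def by blast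
  have "\<exists>s t. w s = w t \<and> s < t"
  proof (cases "s < t")
    case True then show ?thesis using st by blast
  next
    case False then have "t < s" using st(2) by linarith
    then show ?thesis using st(1) by (intro exI[of _ t] exI[of _ s]) simp
  qed
  then obtain s t where st: "w s = w t" "s < t" by blast
  obtain d where d: "t = s + Suc d" using less_imp_Suc_add[OF st(2)] by auto
  have h: "E (w s) j = E (w s) (w t) + E (w t) j" using inv[of s d] unfolding d .
  have z: "E (w t) (w t) = 0" using h unfolding st(1) by linarith
  obtain t' where t': "t = Suc t'" using st(2) by (cases t) auto
  have w0: "w 0 = i" by (simp add: w_def)
  have "E i j = E i (w t) + E (w t) j" using inv[of 0 t'] unfolding w0 t' by simp
  with z show ?thesis by blast
qed

lemma main: "\<exists>E'. tidempotent E' \<and> green_D E E' \<and> (\<forall>i. E' i i = 0)"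
proof -
  obtain v0 where v0: "E v0 v0 = 0" using decomp by blast
  define f where "f = (\<lambda>x. if E x x = 0 then x else v0)"
  have fz: "E (f x) (f x) = 0" for x unfolding f_def using v0 by auto
  have key: "tmult (\<lambda>i l. E i (f l)) (\<lambda>l j. E (f l) j) i j = E i j" for i j
  proof -
    obtain v where v: "E v v = 0" "E i j = E i v + E v j" using decomp by blast
    have fv: "f v = v" unfolding f_def using v by simp
    show ?thesis
      by (rule tmult_eqI[where l=v]) (auto simp: idem_ge fv v(2)[symmetric])
  qed
  have EE: "tmult E E = E" using idem unfolding tidempotent_def .
  define C where "C = (\<lambda>i j. E i (f j))"
  define E' where "E' = (\<lambda>i j. E (f i) (f j))"
  have 1: "C = tmult E C"
  proof (intro ext)
    fix i j
    have "tmult E C i j = tmult E E i (f j)" unfolding C_def tmult_def by simp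
    then show "C i j = tmult E C i j" unfolding EE C_def by simp
  qed
  have 2: "E = tmult C (\<lambda>l j. E (f l) j)" unfolding C_def using key by (intro ext) simp
  have 3: "C = tmult (\<lambda>i l. E i (f l)) E'"
  proof (intro ext)
    fix i j
    have "tmult (\<lambda>i l. E i (f l)) E' i j = tmult (\<lambda>i l. E i (f l)) (\<lambda>l j. E (f l) j) i (f j)"
      unfolding E'_def tmult_def by simp
    then show "C i j = tmult (\<lambda>i l. E i (f l)) E' i j" unfolding key C_def by simp
  qed
  have 4: "E' = tmult (\<lambda>i l. E (f i) l) C"
  proof (intro ext)
    fix i j
    have "tmult (\<lambda>i l. E (f i) l) C i j = tmult E E (f i) (f j)" unfolding C_def tmult_def by simp
    then show "E' i j = tmult (\<lambda>i l. E (f i) l) C i j" unfolding EE E'_def by simp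
  qed
  have 5: "tidempotent E'" unfolding tidempotent_def
  proof (intro ext)
    fix i j
    have "tmult E' E' i j = tmult (\<lambda>i l. E i (f l)) (\<lambda>l j. E (f l) j) (f i) (f j)"
      unfolding E'_def tmult_def by simp
    then show "tmult E' E' i j = E' i j" unfolding key E'_def by simp
  qed
  have "green_R E C" by (rule green_R_I[OF 2 1])
  moreover have "green_L C E'" by (rule green_L_I[OF 3 4])
  ultimately have "green_D E E'" unfolding green_D_def by blast
  moreover have "\<forall>i. E' i i = 0" unfolding E'_def using fz by simp
  ultimately show ?thesis using 5 by blast
qed

end

theorem theorem6p2:
  fixes E :: "('n::finite) tmat"
  assumes "tidempotent E"
  shows "\<exists>E'. tidempotent E' \<and> green_D E E' \<and> (\<forall>i. E' i i = 0)"
  by (rule main[OF assms])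

end
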